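(* Let $E$ be a pseudo effect algebra satisfying (RDP) and let $m\in\mathcal J(E)$. Define $v_m:E\to\mathbb R$ by $$v_m(x):=\sup\{|m(x_1)|+\cdots+|m(x_n)|:\ x=x_1+\cdots+x_n,\ x_1,\dots,x_n\in E,\ n\ge1\}.$$ Then $v_m=|m|$, where $|m|:=m^++m^-$, $m^+:=m\vee0$ and $m^-:=-(m\wedge0)$ in $\mathcal J(E)$.
   Context: Pseudo effect algebra: partial algebra $(E;+,0,1)$ such that for all $a,b,c$: (i) $a+b$ and $(a+b)+c$ exist iff $b+c$ and $a+(b+c)$ exist, and then they are equal; (ii) there is exactly one $d$ and one $e$ with $a+d=e+a=1$; (iii) if $a+b$ exists there are $d,e$ with $a+b=d+a=b+e$; (iv) if $1+a$ or $a+1$ exists then $a=0$. (RDP): whenever $a_1+a_2=b_1+b_2$ there are $d_1,\dots,d_4$ with $d_1+d_2=a_1$, $d_3+d_4=a_2$, $d_1+d_3=b_1$, $d_2+d_4=b_2$. Signed measure: $m:E\to\mathbb R$ additive on defined sums; measure: nonnegative signed measure. $\mathcal J(E)$: signed measures that are differences of two measures, ordered by $m_1\le^+m_2$ iff $m_2-m_1$ is a measure; under (RDP) it is a lattice-ordered group with zero element the zero measure. *)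

theory Defs
  imports Main "HOL-Library.Extended_Real" Complex_Main
begin

text \<open>A partial algebra on carrier E: the partial sum is p a b (None = undefined).\<close>

definition pseudo_effect_algebra ::
  "'a set \<Rightarrow> ('a \<Rightarrow> 'a \<Rightarrow> 'a option) \<Rightarrow> 'a \<Rightarrow> 'a \<Rightarrow> bool" where
  "pseudo_effect_algebra E p z u \<longleftrightarrow>
     z \<in> E \<and> u \<in> E \<and>
     (\<forall>a\<in>E. \<forall>b\<in>E. \<forall>c. p a b = Some c \<longrightarrow> c \<in> E) \<and>
     (\<forall>a\<in>E. \<forall>b\<in>E. \<forall>c\<in>E.
        Option.bind (p a b) (\<lambda>ab. p ab c) = Option.bind (p b c) (\<lambda>bc. p a bc)) \<and>
     (\<forall>a\<in>E. (\<exists>!d. d \<in> E \<and> p a d = Some u) \<and> (\<exists>!e. e \<in> E \<and> p e a = Some u)) \<and>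
     (\<forall>a\<in>E. \<forall>b\<in>E. \<forall>s. p a b = Some s \<longrightarrow>
        (\<exists>d\<in>E. \<exists>e\<in>E. p d a = Some s \<and> p b e = Some s)) \<and>
     (\<forall>a\<in>E. (p u a \<noteq> None \<or> p a u \<noteq> None) \<longrightarrow> a = z)"

definition RDP :: "'a set \<Rightarrow> ('a \<Rightarrow> 'a \<Rightarrow> 'a option) \<Rightarrow> bool" where
  "RDP E p \<longleftrightarrow>
     (\<forall>a1\<in>E. \<forall>a2\<in>E. \<forall>b1\<in>E. \<forall>b2\<in>E.
        p a1 a2 \<noteq> None \<and> p a1 a2 = p b1 b2 \<longrightarrow>
        (\<exists>d1\<in>E. \<exists>d2\<in>E. \<exists>d3\<in>E. \<exists>d4\<in>E.
           p d1 d2 = Some a1 \<and> p d3 d4 = Some a2 \<and>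
           p d1 d3 = Some b1 \<and> p d2 d4 = Some b2))"

definition signed_measure :: "'a set \<Rightarrow> ('a \<Rightarrow> 'a \<Rightarrow> 'a option) \<Rightarrow> ('a \<Rightarrow> real) \<Rightarrow> bool" where
  "signed_measure E p m \<longleftrightarrow>
     (\<forall>a\<in>E. \<forall>b\<in>E. \<forall>c. p a b = Some c \<longrightarrow> m c = m a + m b)"

definition is_measure :: "'a set \<Rightarrow> ('a \<Rightarrow> 'a \<Rightarrow> 'a option) \<Rightarrow> ('a \<Rightarrow> real) \<Rightarrow> bool" where
  "is_measure E p m \<longleftrightarrow> signed_measure E p m \<and> (\<forall>x\<in>E. 0 \<le> m x)"

definition in_J :: "'a set \<Rightarrow> ('a \<Rightarrow> 'a \<Rightarrow> 'a option) \<Rightarrow> ('a \<Rightarrow> real) \<Rightarrow> bool" where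
  "in_J E p m \<longleftrightarrow> (\<exists>m1 m2. is_measure E p m1 \<and> is_measure E p m2 \<and>
                        (\<forall>x\<in>E. m x = m1 x - m2 x))"

definition le_J :: "'a set \<Rightarrow> ('a \<Rightarrow> 'a \<Rightarrow> 'a option) \<Rightarrow> ('a \<Rightarrow> real) \<Rightarrow> ('a \<Rightarrow> real) \<Rightarrow> bool" where
  "le_J E p m1 m2 \<longleftrightarrow> is_measure E p (\<lambda>x. m2 x - m1 x)"

definition is_sup_J where
  "is_sup_J E p m1 m2 s \<longleftrightarrow> in_J E p s \<and> le_J E p m1 s \<and> le_J E p m2 s \<and>
     (\<forall>t. in_J E p t \<and> le_J E p m1 t \<and> le_J E p m2 t \<longrightarrow> le_J E p s t)"

definition is_inf_J where
  "is_inf_J E p m1 m2 s \<longleftrightarrow> in_J E p s \<and> le_J E p s m1 \<and> le_J E p s m2 \<and>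
     (\<forall>t. in_J E p t \<and> le_J E p t m1 \<and> le_J E p t m2 \<longrightarrow> le_J E p t s)"

text \<open>x1 + (x2 + (... + xn)) for a nonempty list; None if undefined or empty.\<close>
fun psum :: "('a \<Rightarrow> 'a \<Rightarrow> 'a option) \<Rightarrow> 'a list \<Rightarrow> 'a option" where
  "psum p [] = None"
| "psum p [a] = Some a"
| "psum p (a # b # xs) = Option.bind (psum p (b # xs)) (p a)"

definition var_m :: "'a set \<Rightarrow> ('a \<Rightarrow> 'a \<Rightarrow> 'a option) \<Rightarrow> ('a \<Rightarrow> real) \<Rightarrow> 'a \<Rightarrow> real" where
  "var_m E p m x = Sup {(\<Sum>y\<leftarrow>xs. \<bar>m y\<bar>) | xs. xs \<noteq> [] \<and> set xs \<subseteq> E \<and> psum p xs = Some x}"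

end

theory Submission
  imports Defs
begin

locale pea_rdp =
  fixes E :: "'a set" and p :: "'a \<Rightarrow> 'a \<Rightarrow> 'a option" and z u :: 'a and m :: "'a \<Rightarrow> real"
  assumes pea: "pseudo_effect_algebra E p z u" and rdp: "RDP E p" and J: "in_J E p m"
begin

lemma pea_all:
  "z \<in> E" "u \<in> E"
  "\<forall>a\<in>E. \<forall>b\<in>E. \<forall>c. p a b = Some c \<longrightarrow> c \<in> E"
  "\<forall>a\<in>E. \<forall>b\<in>E. \<forall>c\<in>E.
        Option.bind (p a b) (\<lambda>ab. p ab c) = Option.bind (p b c) (\<lambda>bc. p a bc)"
  "\<forall>a\<in>E. (\<exists>!d. d \<in> E \<and> p a d = Some u) \<and> (\<exists>!e. e \<in> E \<and> p e a = Some u)"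
  "\<forall>a\<in>E. \<forall>b\<in>E. \<forall>s. p a b = Some s \<longrightarrow>
        (\<exists>d\<in>E. \<exists>e\<in>E. p d a = Some s \<and> p b e = Some s)"
  "\<forall>a\<in>E. (p u a \<noteq> None \<or> p a u \<noteq> None) \<longrightarrow> a = z"
  using pea unfolding pseudo_effect_algebra_def apply -
  apply (elim conjE, assumption)+
  done

lemma closed: "a\<in>E \<Longrightarrow> b\<in>E \<Longrightarrow> p a b = Some c \<Longrightarrow> c \<in> E"
  using pea_all(3) by blast

lemma zE: "z \<in> E" and uE: "u \<in> E"
  using pea_all(1,2) .

lemma assoc: "a\<in>E \<Longrightarrow> b\<in>E \<Longrightarrow> c\<in>E \<Longrightarrow>
  Option.bind (p a b) (\<lambda>ab. p ab c) = Option.bind (p b c) (\<lambda>bc. p a bc)"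
  using pea_all(4) by blast

lemma ii1: assumes "a\<in>E" shows "\<exists>!d. d\<in>E \<and> p a d = Some u"
  using bspec[OF pea_all(5) assms] by (rule conjunct1)

lemma ii2: assumes "a\<in>E" shows "\<exists>!d. d\<in>E \<and> p d a = Some u"
  using bspec[OF pea_all(5) assms] by (rule conjunct2)

lemma iii: "a\<in>E \<Longrightarrow> b\<in>E \<Longrightarrow> p a b = Some s \<Longrightarrow> \<exists>d\<in>E. \<exists>e\<in>E. p d a = Some s \<and> p b e = Some s"
  using pea_all(6) by blast

lemma iv: "a\<in>E \<Longrightarrow> p u a \<noteq> None \<or> p a u \<noteq> None \<Longrightarrow> a = z"
  using pea_all(7) by blast

lemma assoc_l:
  assumes "a\<in>E" "b\<in>E" "c\<in>E" "p a b = Some ab" "p ab c = Some s"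
  shows "\<exists>bc. p b c = Some bc \<and> p a bc = Some s"
proof -
  from assoc[OF assms(1-3)] assms(4,5) have "Option.bind (p b c) (\<lambda>bc. p a bc) = Some s" by simp
  then show ?thesis by (cases "p b c") auto
qed

lemma assoc_r:
  assumes "a\<in>E" "b\<in>E" "c\<in>E" "p b c = Some bc" "p a bc = Some s"
  shows "\<exists>ab. p a b = Some ab \<and> p ab c = Some s"
proof -
  from assoc[OF assms(1-3)] assms(4,5) have "Option.bind (p a b) (\<lambda>ab. p ab c) = Some s" by simp
  then show ?thesis by (cases "p a b") auto
qed

lemma uz: "p u z = Some u"
proof -
  obtain d where "d \<in> E" "p u d = Some u" using ii1[OF uE] by blast
  moreover then have "d = z" using iv by auto
  ultimately show ?thesis by simp
qed

lemma zu: "p z u = Some u"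
proof -
  obtain d where "d \<in> E" "p d u = Some u" using ii2[OF uE] by blast
  moreover then have "d = z" using iv by auto
  ultimately show ?thesis by simp
qed

lemma right_zero: assumes "a \<in> E" shows "p a z = Some a"
proof -
  obtain a' where a': "a' \<in> E" "p a' a = Some u" using ii2[OF assms] by blast
  obtain w where w: "p a z = Some w" "p a' w = Some u"
    using assoc_l[OF a'(1) assms zE a'(2) uz] by blast
  have "w \<in> E" using closed[OF assms zE w(1)] .
  with ii1[OF a'(1)] a' w assms have "w = a" by blast
  with w show ?thesis by simp
qed

lemma left_zero: assumes "a \<in> E" shows "p z a = Some a"
proof -
  obtain a' where a': "a' \<in> E" "p a a' = Some u" using ii1[OF assms] by blast
  obtain w where w: "p z a = Some w" "p w a' = Some u"
    using assoc_r[OF zE assms a'(1) a'(2) zu] by blast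
  have "w \<in> E" using closed[OF zE assms w(1)] .
  with ii2[OF a'(1)] a' w assms have "w = a" by blast
  with w show ?thesis by simp
qed

lemma m_sm: "signed_measure E p m"
proof -
  obtain m1 m2 where M: "is_measure E p m1" "is_measure E p m2" "\<forall>x\<in>E. m x = m1 x - m2 x"
    using J unfolding in_J_def by blast
  show ?thesis unfolding signed_measure_def
  proof (intro ballI allI impI)
    fix a b c assume h: "a\<in>E" "b\<in>E" "p a b = Some c"
    then have c: "c \<in> E" using closed by blast
    have "m1 c = m1 a + m1 b" "m2 c = m2 a + m2 b"
      using h M(1,2) unfolding is_measure_def signed_measure_def by blast+
    then show "m c = m a + m b" using M(3) h c by simp
  qed
qed

lemma m_add: "a\<in>E \<Longrightarrow> b\<in>E \<Longrightarrow> p a b = Some c \<Longrightarrow> m c = m a + m b"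
  using m_sm unfolding signed_measure_def by blast

lemma mz: "m z = 0"
  using m_add[OF zE zE left_zero[OF zE]] by simp

lemma m_bound: assumes "x \<in> E" shows "\<exists>K. \<forall>a b. a\<in>E \<longrightarrow> b\<in>E \<longrightarrow> p a b = Some x \<longrightarrow> m a \<le> K"
proof -
  obtain m1 m2 where M: "is_measure E p m1" "is_measure E p m2" "\<forall>x\<in>E. m x = m1 x - m2 x"
    using J unfolding in_J_def by blast
  show ?thesis
  proof (intro exI allI impI)
    fix a b assume ab: "a\<in>E" "b\<in>E" "p a b = Some x"
    have "m1 x = m1 a + m1 b" using M(1) ab unfolding is_measure_def signed_measure_def by blast
    moreover have "m1 b \<ge> 0" "m2 a \<ge> 0" using M ab unfolding is_measure_def by auto
    ultimately show "m a \<le> m1 x" using M(3) ab by auto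
  qed
qed

definition A where "A x = {m a | a. a\<in>E \<and> (\<exists>b\<in>E. p a b = Some x)}"
definition P where "P x = Sup (A x)"

lemma A_bdd: assumes "x \<in> E" shows "bdd_above (A x)"
proof -
  obtain K where K: "\<forall>a b. a\<in>E \<longrightarrow> b\<in>E \<longrightarrow> p a b = Some x \<longrightarrow> m a \<le> K"
    using m_bound[OF assms] by blast
  show ?thesis
  proof (rule bdd_aboveI)
    fix v assume "v \<in> A x"
    then obtain a b where "v = m a" "a\<in>E" "b\<in>E" "p a b = Some x" unfolding A_def by blast
    then show "v \<le> K" using K by blast
  qed
qed

lemma A_m: assumes "x \<in> E" shows "m x \<in> A x"
proof -
  have "x \<in> E \<and> (\<exists>b\<in>E. p x b = Some x)" using assms right_zero zE by blast
  then show ?thesis unfolding A_def by blast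
qed

lemma A_0: assumes "x \<in> E" shows "0 \<in> A x"
proof -
  have "z \<in> E \<and> (\<exists>b\<in>E. p z b = Some x)" using assms left_zero zE by blast
  then have "m z \<in> A x" unfolding A_def by blast
  then show ?thesis using mz by simp
qed

lemma P_ge: assumes "x \<in> E" shows "m x \<le> P x" "0 \<le> P x"
  unfolding P_def using cSup_upper[OF A_m[OF assms] A_bdd[OF assms]]
    cSup_upper[OF A_0[OF assms] A_bdd[OF assms]] by auto

lemma P_upper: "a\<in>E \<Longrightarrow> b\<in>E \<Longrightarrow> p a b = Some x \<Longrightarrow> m a \<le> P x"
proof -
  assume h: "a\<in>E" "b\<in>E" "p a b = Some x"
  then have "x \<in> E" using closed by blast
  moreover have "m a \<in> A x" unfolding A_def using h by blast
  ultimately show ?thesis unfolding P_def using cSup_upper A_bdd by metis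
qed

lemma P_least: assumes "x \<in> E" "\<And>a b. a\<in>E \<Longrightarrow> b\<in>E \<Longrightarrow> p a b = Some x \<Longrightarrow> m a \<le> K"
  shows "P x \<le> K"
  unfolding P_def
  apply (rule cSup_least)
  using A_m[OF assms(1)] apply blast
  using assms(2) unfolding A_def by auto

lemma P_add: assumes x: "x\<in>E" and y: "y\<in>E" and s: "p x y = Some s" shows "P s = P x + P y"
proof -
  have sE: "s \<in> E" using closed x y s .
  have le1: "P s \<le> P x + P y"
  proof (rule P_least[OF sE])
    fix a b assume ab: "a\<in>E" "b\<in>E" "p a b = Some s"
    have "p a b \<noteq> None \<and> p a b = p x y" using ab s by simp
    then obtain d1 where "d1\<in>E" and "\<exists>d2\<in>E. \<exists>d3\<in>E. \<exists>d4\<in>E.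
           p d1 d2 = Some a \<and> p d3 d4 = Some b \<and> p d1 d3 = Some x \<and> p d2 d4 = Some y"
      using rdp[unfolded RDP_def, rule_format, OF ab(1) ab(2) x y] by blast
    then obtain d2 d3 d4 where d: "d1\<in>E" "d2\<in>E" "d3\<in>E" "d4\<in>E" "p d1 d2 = Some a" "p d3 d4 = Some b"
      "p d1 d3 = Some x" "p d2 d4 = Some y" by blast
    have "m a = m d1 + m d2" using m_add[OF d(1,2,5)] .
    moreover have "m d1 \<le> P x" using P_upper[OF d(1,3,7)] .
    moreover have "m d2 \<le> P y" using P_upper[OF d(2,4,8)] .
    ultimately show "m a \<le> P x + P y" by simp
  qed
  have le2: "P x + P y \<le> P s"
  proof -
    have "P x \<le> P s - P y"
    proof (rule P_least[OF x])
      fix a b assume ab: "a\<in>E" "b\<in>E" "p a b = Some x"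
      have "P y \<le> P s - m a"
      proof (rule P_least[OF y])
        fix c d assume cd: "c\<in>E" "d\<in>E" "p c d = Some y"
        obtain w where w: "p b y = Some w" "p a w = Some s" using assoc_l[OF ab(1,2) y ab(3) s] by blast
        obtain bc where bc: "p b c = Some bc" "p bc d = Some w" using assoc_r[OF ab(2) cd(1,2) cd(3) w(1)] by blast
        have bcE: "bc\<in>E" using closed[OF ab(2) cd(1) bc(1)] .
        obtain e where e: "e\<in>E" "p c e = Some bc" using iii[OF ab(2) cd(1) bc(1)] by blast
        obtain ed where ed: "p e d = Some ed" "p c ed = Some w" using assoc_l[OF cd(1) e(1) cd(2) e(2) bc(2)] by blast
        have edE: "ed\<in>E" using closed[OF e(1) cd(2) ed(1)] .
        obtain ac where ac: "p a c = Some ac" "p ac ed = Some s" using assoc_r[OF ab(1) cd(1) edE ed(2) w(2)] by blast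
        have acE: "ac \<in> E" using closed[OF ab(1) cd(1) ac(1)] .
        have "m ac \<le> P s" using P_upper[OF acE edE ac(2)] .
        moreover have "m ac = m a + m c" using m_add[OF ab(1) cd(1) ac(1)] .
        ultimately show "m c \<le> P s - m a" by simp
      qed
      then show "m a \<le> P s - P y" by simp
    qed
    then show ?thesis by simp
  qed
  from le1 le2 show ?thesis by simp
qed

lemma P_sm: "signed_measure E p P"
  unfolding signed_measure_def using P_add by blast

lemma P_meas: "is_measure E p P"
  unfolding is_measure_def using P_sm P_ge by blast

lemma Pm_meas: "is_measure E p (\<lambda>x. P x - m x)"
  unfolding is_measure_def signed_measure_def
proof (intro conjI ballI allI impI)
  fix a b c assume h: "a\<in>E" "b\<in>E" "p a b = Some c"
  show "P c - m c = P a - m a + (P b - m b)" using P_add[OF h] m_add[OF h] by simp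
next
  fix x assume "x \<in> E" then show "0 \<le> P x - m x" using P_ge by simp
qed

lemma zero_meas: "is_measure E p (\<lambda>_. 0)"
  unfolding is_measure_def signed_measure_def by simp

lemma sup_P: "is_sup_J E p m (\<lambda>_. 0) P"
  unfolding is_sup_J_def le_J_def
proof (intro conjI allI impI)
  show "in_J E p P" unfolding in_J_def using P_meas zero_meas by fastforce
  show "is_measure E p (\<lambda>x. P x - m x)" by (rule Pm_meas)
  show "is_measure E p (\<lambda>x. P x - 0)" using P_meas by simp
  fix t assume "in_J E p t \<and> is_measure E p (\<lambda>x. t x - m x) \<and> is_measure E p (\<lambda>x. t x - 0)"
  then have t1: "is_measure E p (\<lambda>x. t x - m x)" and t2: "is_measure E p t" by auto
  show "is_measure E p (\<lambda>x. t x - P x)"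
    unfolding is_measure_def signed_measure_def
  proof (intro conjI ballI allI impI)
    fix a b c assume h: "a\<in>E" "b\<in>E" "p a b = Some c"
    have "t c = t a + t b" using t2 h unfolding is_measure_def signed_measure_def by blast
    then show "t c - P c = t a - P a + (t b - P b)" using P_add[OF h] by simp
  next
    fix x assume x: "x \<in> E"
    have "P x \<le> t x"
    proof (rule P_least[OF x])
      fix a b assume h: "a\<in>E" "b\<in>E" "p a b = Some x"
      have "t x = t a + t b" using t2 h unfolding is_measure_def signed_measure_def by blast
      moreover have "0 \<le> t b" "0 \<le> t a - m a" using t1 t2 h unfolding is_measure_def by auto
      ultimately show "m a \<le> t x" by simp
    qed
    then show "0 \<le> t x - P x" by simp
  qed
qed

lemma inf_N: "is_inf_J E p m (\<lambda>_. 0) (\<lambda>x. m x - P x)"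
  unfolding is_inf_J_def le_J_def
proof (intro conjI allI impI)
  obtain m1 m2 where M: "is_measure E p m1" "is_measure E p m2" "\<forall>x\<in>E. m x = m1 x - m2 x"
    using J unfolding in_J_def by blast
  have "is_measure E p (\<lambda>x. m2 x + P x)"
    unfolding is_measure_def signed_measure_def
  proof (intro conjI ballI allI impI)
    fix a b c assume h: "a\<in>E" "b\<in>E" "p a b = Some c"
    have "m2 c = m2 a + m2 b" using M(2) h unfolding is_measure_def signed_measure_def by blast
    then show "m2 c + P c = m2 a + P a + (m2 b + P b)" using P_add[OF h] by simp
  next
    fix x assume "x \<in> E" then show "0 \<le> m2 x + P x" using P_ge M(2) unfolding is_measure_def by fastforce
  qed
  then show "in_J E p (\<lambda>x. m x - P x)" unfolding in_J_def using M by fastforce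
  have "(\<lambda>x. m x - (m x - P x)) = P" by auto
  then show "is_measure E p (\<lambda>x. m x - (m x - P x))" using P_meas by simp
  have "(\<lambda>x. 0 - (m x - P x)) = (\<lambda>x. P x - m x)" by auto
  then show "is_measure E p (\<lambda>x. 0 - (m x - P x))" using Pm_meas by simp
  fix t assume "in_J E p t \<and> is_measure E p (\<lambda>x. m x - t x) \<and> is_measure E p (\<lambda>x. 0 - t x)"
  then have t1: "is_measure E p (\<lambda>x. m x - t x)" and t2: "is_measure E p (\<lambda>x. 0 - t x)" by auto
  show "is_measure E p (\<lambda>x. m x - P x - t x)"
    unfolding is_measure_def signed_measure_def
  proof (intro conjI ballI allI impI)
    fix a b c assume h: "a\<in>E" "b\<in>E" "p a b = Some c"
    have "0 - t c = (0 - t a) + (0 - t b)" using t2 h unfolding is_measure_def signed_measure_def by blast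
    then show "m c - P c - t c = m a - P a - t a + (m b - P b - t b)" using P_add[OF h] m_add[OF h] by simp
  next
    fix x assume x: "x \<in> E"
    have "P x \<le> m x - t x"
    proof (rule P_least[OF x])
      fix a b assume h: "a\<in>E" "b\<in>E" "p a b = Some x"
      have "0 - t x = (0 - t a) + (0 - t b)" using t2 h unfolding is_measure_def signed_measure_def by blast
      moreover have "m x = m a + m b" using m_add[OF h] .
      moreover have "0 \<le> m b - t b" "0 \<le> 0 - t a" using t1 t2 h unfolding is_measure_def by auto
      ultimately show "m a \<le> m x - t x" by simp
    qed
    then show "0 \<le> m x - P x - t x" by simp
  qed
qed

lemma psum_meas: "signed_measure E p f \<Longrightarrow> set xs \<subseteq> E \<Longrightarrow> psum p xs = Some x \<Longrightarrow>
   x \<in> E \<and> (\<Sum>y\<leftarrow>xs. f y) = f x"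
proof (induction xs arbitrary: x)
  case Nil then show ?case by simp
next
  case (Cons a xs)
  show ?case
  proof (cases xs)
    case Nil then show ?thesis using Cons.prems by simp
  next
    case (Cons b ys)
    then obtain y where y: "psum p xs = Some y" "p a y = Some x"
      using Cons.prems(3) by (cases "psum p (b # ys)") auto
    have IH: "y \<in> E \<and> (\<Sum>y\<leftarrow>xs. f y) = f y" using Cons.IH[OF Cons.prems(1) _ y(1)] Cons.prems(2) by simp
    have aE: "a \<in> E" using Cons.prems(2) by simp
    have "x \<in> E" using closed[OF aE _ y(2)] IH by blast
    moreover have "f x = f a + f y" using Cons.prems(1) aE IH y(2) unfolding signed_measure_def by blast
    ultimately show ?thesis using IH by simp
  qed
qed

lemma var_eq: assumes x: "x\<in>E" shows "var_m E p m x = 2 * P x - m x"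
proof -
  define V where "V = {(\<Sum>y\<leftarrow>xs. \<bar>m y\<bar>) | xs. xs \<noteq> [] \<and> set xs \<subseteq> E \<and> psum p xs = Some x}"
  have g: "signed_measure E p (\<lambda>y. 2 * P y - m y)"
    unfolding signed_measure_def
  proof (intro ballI allI impI)
    fix a b c assume h: "a\<in>E" "b\<in>E" "p a b = Some c"
    show "2 * P c - m c = 2 * P a - m a + (2 * P b - m b)" using P_add[OF h] m_add[OF h] by simp
  qed
  have bound: "\<forall>v\<in>V. v \<le> 2 * P x - m x"
  proof
    fix v assume "v \<in> V"
    then obtain xs where xs: "v = (\<Sum>y\<leftarrow>xs. \<bar>m y\<bar>)" "set xs \<subseteq> E" "psum p xs = Some x"
      unfolding V_def by blast
    have "(\<Sum>y\<leftarrow>xs. \<bar>m y\<bar>) \<le> (\<Sum>y\<leftarrow>xs. 2 * P y - m y)"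
    proof (rule sum_list_mono)
      fix y assume "y \<in> set xs"
      then have "y \<in> E" using xs(2) by blast
      then show "\<bar>m y\<bar> \<le> 2 * P y - m y" using P_ge[of y] by linarith
    qed
    also have "\<dots> = 2 * P x - m x" using psum_meas[OF g xs(2,3)] by simp
    finally show "v \<le> 2 * P x - m x" using xs(1) by simp
  qed
  have ne: "\<bar>m x\<bar> \<in> V" unfolding V_def
    apply (rule CollectI, rule exI[of _ "[x]"]) using x by simp
  have bdd: "bdd_above V" using bound by (auto intro: bdd_aboveI)
  have "Sup V \<le> 2 * P x - m x" using ne bound by (intro cSup_least) auto
  moreover have "P x \<le> (Sup V + m x) / 2"
  proof (rule P_least[OF x])
    fix a b assume h: "a\<in>E" "b\<in>E" "p a b = Some x"
    have "\<bar>m a\<bar> + \<bar>m b\<bar> \<in> V" unfolding V_def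
      apply (rule CollectI, rule exI[of _ "[a,b]"]) using h by simp
    then have "\<bar>m a\<bar> + \<bar>m b\<bar> \<le> Sup V" using bdd by (rule cSup_upper)
    moreover have "m x = m a + m b" using m_add[OF h] .
    moreover have "m a \<le> \<bar>m a\<bar>" "- m b \<le> \<bar>m b\<bar>" by auto
    ultimately have "2 * m a \<le> Sup V + m x" by linarith
    then show "m a \<le> (Sup V + m x) / 2" by simp
  qed
  then have "2 * P x \<le> Sup V + m x" by simp
  ultimately have "Sup V = 2 * P x - m x" by linarith
  then show ?thesis unfolding var_m_def V_def[symmetric] .
qed

end

lemma sup_le: assumes "is_sup_J E p a b s1" "is_sup_J E p a b s2" shows "le_J E p s1 s2"
proof -
  have 1: "in_J E p s2 \<and> le_J E p a s2 \<and> le_J E p b s2" using assms(2) unfolding is_sup_J_def by simp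
  have "\<forall>t. in_J E p t \<and> le_J E p a t \<and> le_J E p b t \<longrightarrow> le_J E p s1 t" using assms(1) unfolding is_sup_J_def by simp
  then have "in_J E p s2 \<and> le_J E p a s2 \<and> le_J E p b s2 \<longrightarrow> le_J E p s1 s2" by (rule spec)
  then show ?thesis using 1 by (rule mp)
qed

lemma inf_le: assumes "is_inf_J E p a b s1" "is_inf_J E p a b s2" shows "le_J E p s2 s1"
proof -
  have 1: "in_J E p s2 \<and> le_J E p s2 a \<and> le_J E p s2 b" using assms(2) unfolding is_inf_J_def by simp
  have "\<forall>t. in_J E p t \<and> le_J E p t a \<and> le_J E p t b \<longrightarrow> le_J E p t s1" using assms(1) unfolding is_inf_J_def by simp
  then have "in_J E p s2 \<and> le_J E p s2 a \<and> le_J E p s2 b \<longrightarrow> le_J E p s2 s1" by (rule spec)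
  then show ?thesis using 1 by (rule mp)
qed

lemma le_J_antisym: "le_J E p f g \<Longrightarrow> le_J E p g f \<Longrightarrow> x \<in> E \<Longrightarrow> f x = g x"
  unfolding le_J_def is_measure_def by force

theorem proposition4p5:
  fixes E :: "'a set" and p :: "'a \<Rightarrow> 'a \<Rightarrow> 'a option" and z u :: 'a
    and m :: "'a \<Rightarrow> real"
  assumes "pseudo_effect_algebra E p z u"
    and "RDP E p"
    and "in_J E p m"
  shows "(\<exists>mp mn. is_sup_J E p m (\<lambda>_. 0) mp \<and> is_inf_J E p m (\<lambda>_. 0) mn)
    \<and> (\<forall>mp mn. is_sup_J E p m (\<lambda>_. 0) mp \<and> is_inf_J E p m (\<lambda>_. 0) mn \<longrightarrow>
         (\<forall>x\<in>E. var_m E p m x = mp x + (- mn x)))"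
proof -
  interpret pea_rdp E p z u m using assms by unfold_locales
  have sup: "is_sup_J E p m (\<lambda>_. 0) P" by (rule sup_P)
  have inf: "is_inf_J E p m (\<lambda>_. 0) (\<lambda>x. m x - P x)" by (rule inf_N)
  show ?thesis
  proof (intro conjI allI impI ballI)
    show "\<exists>mp mn. is_sup_J E p m (\<lambda>_. 0) mp \<and> is_inf_J E p m (\<lambda>_. 0) mn" using sup inf by blast
    fix mp mn x assume h: "is_sup_J E p m (\<lambda>_. 0) mp \<and> is_inf_J E p m (\<lambda>_. 0) mn" and x: "x \<in> E"
    have hs: "is_sup_J E p m (\<lambda>_. 0) mp" and hi: "is_inf_J E p m (\<lambda>_. 0) mn" using h by simp_all
    have 1: "mp x = P x" using le_J_antisym[OF sup_le[OF hs sup] sup_le[OF sup hs] x] .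
    have 2: "mn x = m x - P x" using le_J_antisym[OF inf_le[OF inf hi] inf_le[OF hi inf] x] .
    show "var_m E p m x = mp x + - mn x" using var_eq[OF x] 1 2 by simp
  qed
qed

end
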